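(* There exist functions $f_n\colon\mathbb R^2\to\mathbb R$, $n\in\mathbb N$, such that the family $\{f_n(x,\cdot):n\in\mathbb N\}$ is equi-Baire 1 for every $x\in\mathbb R$ and the family $\{f_n(\cdot,y):n\in\mathbb N\}$ is equi-Baire 1 for every $y\in\mathbb R$, but for no nonmeager $G_\delta$ set $A\subseteq\mathbb R$ (in particular, for no comeager $G_\delta$ set $A$) is the family $\{f_n|_{A\times\mathbb R}:n\in\mathbb N\}$ equi-Baire 1 on $A\times\mathbb R$. Specifically, one can take $f_n=g$ for all $n$, where $g$ is the characteristic function of $\{(x,x):x\in B\}$ for a Bernstein set $B\subseteq\mathbb R$.
   Context: For metric spaces $(X,\rho)$, $(Y,d)$, a family $\mathcal F\subseteq Y^X$ is equi-Baire 1 if for every $\varepsilon>0$ there is $\delta_\varepsilon\colon X\to(0,\infty)$ such that for all $x,y\in X$ and all $f\in\mathcal F$, $\rho(x,y)<\min\{\delta_\varepsilon(x),\delta_\varepsilon(y)\}$ implies $d(f(x),f(y))<\varepsilon$. A Bernstein set is a set $B\subseteq\mathbb R$ such that both $B$ and $\mathbb R\setminus B$ meet every uncountable closed subset of $\mathbb R$. $\mathbb R^2$ and subsets carry the Euclidean metric. *)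

theory Defs
  imports "HOL-Analysis.Analysis"
begin

definition equi_baire1_on :: "'a::metric_space set \<Rightarrow> ('a \<Rightarrow> 'b::metric_space) set \<Rightarrow> bool" where
  "equi_baire1_on S F \<longleftrightarrow>
     (\<forall>\<epsilon>>0. \<exists>\<delta>::'a \<Rightarrow> real. (\<forall>x\<in>S. \<delta> x > 0) \<and>
        (\<forall>x\<in>S. \<forall>y\<in>S. \<forall>f\<in>F. dist x y < min (\<delta> x) (\<delta> y) \<longrightarrow> dist (f x) (f y) < \<epsilon>))"

definition nowhere_dense :: "'a::topological_space set \<Rightarrow> bool" where
  "nowhere_dense S \<longleftrightarrow> interior (closure S) = {}"

definition meager :: "'a::topological_space set \<Rightarrow> bool" where
  "meager S \<longleftrightarrow> (\<exists>N::nat \<Rightarrow> 'a set. (\<forall>n. nowhere_dense (N n)) \<and> S \<subseteq> (\<Union>n. N n))"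

definition bernstein :: "real set \<Rightarrow> bool" where
  "bernstein B \<longleftrightarrow>
     (\<forall>C. closed C \<and> uncountable C \<longrightarrow> B \<inter> C \<noteq> {} \<and> (- B) \<inter> C \<noteq> {})"

definition sep_equi_not_joint :: "(nat \<Rightarrow> real \<times> real \<Rightarrow> real) \<Rightarrow> bool" where
  "sep_equi_not_joint f \<longleftrightarrow>
     (\<forall>x. equi_baire1_on UNIV (range (\<lambda>n y. f n (x, y)))) \<and>
     (\<forall>y. equi_baire1_on UNIV (range (\<lambda>n x. f n (x, y)))) \<and>
     (\<forall>A::real set. gdelta A \<and> \<not> meager A \<longrightarrow> \<not> equi_baire1_on (A \<times> UNIV) (range f))"

end

theory Submission
  imports Defs
begin


lemma meager_mono: "meager T \<Longrightarrow> S \<subseteq> T \<Longrightarrow> meager S"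
  unfolding meager_def by blast

lemma meager_UN:
  assumes "\<And>n::nat. meager (S n)" shows "meager (\<Union>n. S n)"
proof -
  have ex: "\<exists>N. \<forall>n. (\<forall>m::nat. nowhere_dense (N n m)) \<and> S n \<subseteq> (\<Union>m::nat. N n m)"
    apply (rule choice)
    apply (rule allI)
    subgoal for n using assms[of n] unfolding meager_def by assumption
    done
  then obtain N where N0: "\<forall>n. (\<forall>m::nat. nowhere_dense (N n m)) \<and> S n \<subseteq> (\<Union>m::nat. N n m)"
    by (rule exE)
  have N1: "nowhere_dense (N n m)" for n m :: nat using N0 by simp
  have N2: "S n \<subseteq> (\<Union>m. N n m)" for n using N0 by simp
  define M where "M k = (case prod_decode k of (i,j) \<Rightarrow> N i j)" for k
  have Mnd: "\<forall>k. nowhere_dense (M k)"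
  proof
    fix k show "nowhere_dense (M k)" using N1 by (cases "prod_decode k") (simp add: M_def)
  qed
  have Msub: "(\<Union>n. S n) \<subseteq> (\<Union>k. M k)"
  proof
    fix x assume "x \<in> (\<Union>n. S n)"
    then obtain n where "x \<in> S n" by (rule UN_E)
    then have "x \<in> (\<Union>m. N n m)" using N2[of n] by (rule subsetD[rotated])
    then obtain m where "x \<in> N n m" by (rule UN_E)
    then have "x \<in> M (prod_encode (n,m))" by (simp add: M_def)
    then show "x \<in> (\<Union>k. M k)" by (rule UN_I[OF UNIV_I])
  qed
  show ?thesis unfolding meager_def by (rule exI[of _ M], rule conjI[OF Mnd Msub])
qed

lemma meager_Un: "meager S \<Longrightarrow> meager T \<Longrightarrow> meager (S \<union> T)"
proof -
  assume a: "meager S" "meager T"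
  have "meager (\<Union>n. if n = (0::nat) then S else T)"
    using a meager_UN[of "\<lambda>n. if n = (0::nat) then S else T"] by simp
  moreover have "(\<Union>n. if n = (0::nat) then S else T) = S \<union> T"
    by (auto split: if_splits)
  ultimately show ?thesis by (rule back_subst)
qed

lemma not_meager_interval:
  assumes "\<not> meager (W::real set)"
  shows "\<exists>a b. a < b \<and> {a<..<b} \<subseteq> closure W"
proof -
  have "\<not> nowhere_dense W"
  proof
    assume "nowhere_dense W"
    then have "meager W" unfolding meager_def by (intro exI[of _ "\<lambda>_. W"] conjI allI) (assumption, rule subsetI, rule UN_I[OF UNIV_I])
    then show False using assms by simp
  qed
  then obtain x where "x \<in> interior (closure W)" unfolding nowhere_dense_def by blast
  then obtain e where e: "e > 0" "ball x e \<subseteq> closure W"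
    by (meson mem_interior)
  have "{x - e<..<x + e} \<subseteq> ball x e" by (auto simp: dist_real_def)
  then have "{x - e<..<x + e} \<subseteq> closure W" using e(2) by (rule order_trans)
  moreover have "x - e < x + e" using e by simp
  ultimately show ?thesis by (intro exI conjI)
qed




definition pickI :: "(nat \<Rightarrow> real set) \<Rightarrow> nat \<Rightarrow> real \<times> real \<Rightarrow> real \<times> real" where
  "pickI U n cd = (SOME p. fst cd < fst p \<and> fst p < snd p \<and> snd p < snd cd \<and> {fst p..snd p} \<subseteq> U n)"

definition childI :: "(nat \<Rightarrow> real set) \<Rightarrow> bool \<Rightarrow> nat \<Rightarrow> real \<times> real \<Rightarrow> real \<times> real" where
  "childI U x n cd = pickI U n (if x then ((fst cd + snd cd)/2, snd cd) else (fst cd, (fst cd + snd cd)/2))"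

primrec schemeI :: "(nat \<Rightarrow> real set) \<Rightarrow> real \<times> real \<Rightarrow> (nat \<Rightarrow> bool) \<Rightarrow> nat \<Rightarrow> real \<times> real" where
  "schemeI U r h 0 = r"
| "schemeI U r h (Suc k) = childI U (h k) k (schemeI U r h k)"

locale cscheme =
  fixes U :: "nat \<Rightarrow> real set" and a b :: real
  assumes opn: "\<And>n. open (U n)"
    and dense: "\<And>n c d. a < c \<Longrightarrow> c < d \<Longrightarrow> d < b \<Longrightarrow> {c<..<d} \<inter> U n \<noteq> {}"
begin

lemma pick_exists:
  assumes "a \<le> c" "c < d" "d \<le> b"
  shows "\<exists>p. c < fst p \<and> fst p < snd p \<and> snd p < d \<and> {fst p..snd p} \<subseteq> U n"
proof -
  define c1 where "c1 = c + (d-c)/3"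
  define d1 where "d1 = d - (d-c)/3"
  have c1: "c < c1" "c1 < d1" "d1 < d" using assms by (auto simp: c1_def d1_def field_simps)
  have "{c1<..<d1} \<inter> U n \<noteq> {}" using dense[of c1 d1 n] assms c1 by auto
  then obtain x where x: "x \<in> {c1<..<d1}" "x \<in> U n" by blast
  have "open ({c1<..<d1} \<inter> U n)" using opn by auto
  then obtain e where e: "e > 0" "ball x e \<subseteq> {c1<..<d1} \<inter> U n"
    using x by (meson IntI open_contains_ball)
  have sub: "{x - e/2 .. x + e/2} \<subseteq> ball x e" using e by (auto simp: dist_real_def)
  have l: "x - e/2 \<in> ball x e" "x + e/2 \<in> ball x e" using e by (auto simp: dist_real_def)
  have "x - e/2 \<in> {c1<..<d1}" "x + e/2 \<in> {c1<..<d1}" using e(2) l by blast+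
  then have "c1 < x - e/2" "x + e/2 < d1" by auto
  then show ?thesis
    using e sub c1 by (intro exI[of _ "(x - e/2, x + e/2)"]) auto
qed

lemma pickI:
  assumes "a \<le> c" "c < d" "d \<le> b"
  shows "c < fst (pickI U n (c,d)) \<and> fst (pickI U n (c,d)) < snd (pickI U n (c,d)) \<and>
         snd (pickI U n (c,d)) < d \<and> {fst (pickI U n (c,d))..snd (pickI U n (c,d))} \<subseteq> U n"
  unfolding pickI_def using someI_ex[OF pick_exists[OF assms, of n]] by simp

lemma childI:
  fixes x :: bool and n :: nat
  assumes "a \<le> c" "c < d" "d \<le> b"
  defines "p \<equiv> childI U x n (c,d)"
  shows "c < fst p" "fst p < snd p" "snd p < d" "{fst p..snd p} \<subseteq> U n"
    "x \<Longrightarrow> (c+d)/2 < fst p" "\<not> x \<Longrightarrow> snd p < (c+d)/2"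
proof -
  have m: "a \<le> (c+d)/2" "(c+d)/2 \<le> b" "c < (c+d)/2" "(c+d)/2 < d" using assms by auto
  show "c < fst p" "fst p < snd p" "snd p < d" "{fst p..snd p} \<subseteq> U n"
    "x \<Longrightarrow> (c+d)/2 < fst p" "\<not> x \<Longrightarrow> snd p < (c+d)/2"
    using pickI[of "(c+d)/2" d n] pickI[of c "(c+d)/2" n] m assms
    unfolding p_def childI_def by (cases x; force)+
qed

end



lemma uncountable_nat_sets: "uncountable (UNIV :: nat set set)"
  by (metis countable_eqpoll eqpoll_sym nat_sets_eqpoll_reals uncountable_UNIV_real)

context cscheme begin

context
  fixes a0 b0 :: real
  assumes r0: "a < a0" "a0 < b0" "b0 < b"
begin

abbreviation "I h k \<equiv> schemeI U (a0,b0) h k"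
abbreviation "iv h k \<equiv> {fst (I h k)..snd (I h k)}"

lemma inv: "a < fst (I h k) \<and> fst (I h k) < snd (I h k) \<and> snd (I h k) < b"
proof (induction k)
  case 0 then show ?case using r0 by simp
next
  case (Suc k)
  obtain c d where cd: "I h k = (c,d)" by fastforce
  have "a \<le> c" "c < d" "d \<le> b" using Suc cd by auto
  from childI[OF this, of "h k" k] show ?case using cd Suc by auto
qed

lemma stepI:
  "fst (I h k) < fst (I h (Suc k))" "snd (I h (Suc k)) < snd (I h k)"
  "{fst (I h (Suc k))..snd (I h (Suc k))} \<subseteq> U k"
proof -
  obtain c d where cd: "I h k = (c,d)" by fastforce
  have "a \<le> c" "c < d" "d \<le> b" using inv[of h k] cd by auto
  from childI[OF this, of "h k" k] cd
  show "fst (I h k) < fst (I h (Suc k))" "snd (I h (Suc k)) < snd (I h k)"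
    "{fst (I h (Suc k))..snd (I h (Suc k))} \<subseteq> U k" by auto
qed

lemma nested: "k \<le> m \<Longrightarrow> fst (I h k) \<le> fst (I h m) \<and> snd (I h m) \<le> snd (I h k)"
proof (induction m rule: dec_induct)
  case base then show ?case by simp
next
  case (step m) then show ?case using stepI[of h m] by (meson less_le_trans not_le order.strict_implies_order)
qed

lemma iv_nested: "k \<le> m \<Longrightarrow> iv h m \<subseteq> iv h k"
  using nested[of k m h] by auto

lemma fst_lt_snd: "fst (I h k) < snd (I h m)"
proof -
  have "fst (I h k) \<le> fst (I h (max k m))" "snd (I h (max k m)) \<le> snd (I h m)"
    using nested by auto
  moreover have "fst (I h (max k m)) < snd (I h (max k m))" using inv by blast
  ultimately show ?thesis by linarith
qed

lemma prefix: "(\<And>j. j < k \<Longrightarrow> h j = h' j) \<Longrightarrow> I h k = I h' k"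
  by (induction k) auto

lemma split_disj:
  assumes "I h k = I h' k" "h k \<noteq> h' k"
  shows "iv h (Suc k) \<inter> iv h' (Suc k) = {}"
proof -
  obtain c d where cd: "I h k = (c,d)" by fastforce
  have cd': "I h' k = (c,d)" using cd assms by simp
  have "a \<le> c" "c < d" "d \<le> b" using inv[of h k] cd by auto
  note C1 = childI[OF this, of "h k" k] and C2 = childI[OF this, of "h' k" k]
  show ?thesis
  proof (cases "h k")
    case True
    then have "\<not> h' k" using assms by simp
    then show ?thesis using C1 C2 True cd cd' by auto
  next
    case False
    then have "h' k" using assms by simp
    then show ?thesis using C1 C2 False cd cd' by auto
  qed
qed

lemma sep:
  assumes "x \<in> iv h k" "x \<in> iv h' k"
  shows "j < k \<Longrightarrow> h j = h' j"
proof (induction j rule: less_induct)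
  case (less j)
  then have "I h j = I h' j" by (intro prefix) auto
  moreover have sj: "Suc j \<le> k" using less.prems by simp
  have "iv h k \<subseteq> iv h (Suc j)" "iv h' k \<subseteq> iv h' (Suc j)"
    using iv_nested[OF sj] by blast+
  then have "x \<in> iv h (Suc j)" "x \<in> iv h' (Suc j)" using assms by blast+
  ultimately show ?case using split_disj[of h j h'] by blast
qed

definition "KK = {x. \<exists>h. \<forall>k. x \<in> iv h k}"

lemma KK_eq: "KK = (\<Inter>k. \<Union>h. iv h k)"
proof
  show "KK \<subseteq> (\<Inter>k. \<Union>h. iv h k)" unfolding KK_def by blast
next
  show "(\<Inter>k. \<Union>h. iv h k) \<subseteq> KK"
  proof
    fix x assume "x \<in> (\<Inter>k. \<Union>h. iv h k)"
    then have "\<forall>k. \<exists>h. x \<in> iv h k" by blast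
    then obtain H where H: "\<And>k. x \<in> iv (H k) k" by metis
    define g where "g j = H (Suc j) j" for j
    have "x \<in> iv g k" for k
    proof -
      have "g j = H k j" if "j < k" for j
      proof -
        have "iv (H k) k \<subseteq> iv (H k) (Suc j)" using iv_nested[OF Suc_leI[OF that]] by blast
        then have "x \<in> iv (H k) (Suc j)" using H[of k] by blast
        then show ?thesis unfolding g_def using sep[OF H[of "Suc j"]] by blast
      qed
      then have "I g k = I (H k) k" by (intro prefix) auto
      then show ?thesis using H[of k] by simp
    qed
    then show "x \<in> KK" unfolding KK_def by blast
  qed
qed

lemma finite_level: "finite (range (\<lambda>h. iv h k))"
proof -
  have "range (\<lambda>h. iv h k) \<subseteq> (\<lambda>S. iv (\<lambda>j. j \<in> S) k) ` Pow {..<k}"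
  proof
    fix X assume "X \<in> range (\<lambda>h. iv h k)"
    then obtain h where h: "X = iv h k" by blast
    have "I h k = I (\<lambda>j. j \<in> {j. j < k \<and> h j}) k" by (intro prefix) auto
    then show "X \<in> (\<lambda>S. iv (\<lambda>j. j \<in> S) k) ` Pow {..<k}"
      using h by (intro image_eqI[of _ _ "{j. j < k \<and> h j}"]) auto
  qed
  then show ?thesis by (rule finite_subset) auto
qed

lemma KK_closed: "closed KK"
  unfolding KK_eq
  by (intro closed_INT ballI closed_Union finite_level) auto

definition "xpt h = Sup (range (\<lambda>k. fst (I h k)))"

lemma xpt_in: "xpt h \<in> iv h k"
proof -
  have bdd: "bdd_above (range (\<lambda>k. fst (I h k)))"
    using fst_lt_snd[of h _ 0] by (intro bdd_aboveI[of _ "snd (I h 0)"]) (auto intro: less_imp_le)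
  have "fst (I h k) \<le> xpt h" unfolding xpt_def by (rule cSup_upper[OF _ bdd]) auto
  moreover have "xpt h \<le> snd (I h k)" unfolding xpt_def
    by (rule cSUP_least) (auto intro: less_imp_le fst_lt_snd)
  ultimately show ?thesis by simp
qed

lemma xpt_inj: "inj xpt"
proof (rule injI, rule ccontr)
  fix h h' assume eq: "xpt h = xpt h'" and ne: "h \<noteq> h'"
  then obtain j where "h j \<noteq> h' j" by blast
  then obtain j where j: "h j \<noteq> h' j" "\<And>i. i < j \<Longrightarrow> h i = h' i"
    using exists_least_iff[of "\<lambda>j. h j \<noteq> h' j"] by blast
  then have "I h j = I h' j" by (intro prefix) auto
  from split_disj[OF this j(1)] show False using xpt_in[of h "Suc j"] xpt_in[of h' "Suc j"] eq by auto
qed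

lemma KK_props: "closed KK" "uncountable KK" "KK \<subseteq> {a<..<b}" "KK \<subseteq> (\<Inter>n. U n)"
proof -
  show "closed KK" by (rule KK_closed)
  have rng: "range xpt \<subseteq> KK" unfolding KK_def using xpt_in by blast
  show "uncountable KK"
  proof
    assume "countable KK"
    moreover have "range (\<lambda>S::nat set. xpt (\<lambda>j. j \<in> S)) \<subseteq> KK" using rng by auto
    ultimately have "countable (range (\<lambda>S::nat set. xpt (\<lambda>j. j \<in> S)))"
      by (rule countable_subset[rotated])
    moreover have "inj (\<lambda>S::nat set. xpt (\<lambda>j. j \<in> S))"
      using xpt_inj by (auto simp: inj_def fun_eq_iff)
    ultimately have "countable (UNIV :: nat set set)" by (rule countable_image_inj_on)
    then show False using uncountable_nat_sets by simp
  qed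
  show "KK \<subseteq> {a<..<b}"
  proof
    fix x assume "x \<in> KK"
    then obtain h where "x \<in> iv h 0" unfolding KK_def by blast
    then show "x \<in> {a<..<b}" using r0 by auto
  qed
  show "KK \<subseteq> (\<Inter>n. U n)"
  proof
    fix x assume "x \<in> KK"
    then obtain h where "\<forall>k. x \<in> iv h k" unfolding KK_def by blast
    then show "x \<in> (\<Inter>n. U n)" using stepI(3)[of h] by blast
  qed
qed

end

lemma exists_K: "a < b \<Longrightarrow> \<exists>K. closed K \<and> uncountable K \<and> K \<subseteq> {a<..<b} \<inter> (\<Inter>n. U n)"
proof -
  assume "a < b"
  define a0 where "a0 = a + (b-a)/3"
  define b0 where "b0 = b - (b-a)/3"
  have "a < a0" "a0 < b0" "b0 < b" using \<open>a<b\<close> by (auto simp: a0_def b0_def field_simps)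
  from KK_props[OF this] show ?thesis by blast
qed

end



lemma not_meager_closed:
  fixes Fo :: "nat \<Rightarrow> real set" and G :: "real set"
  assumes "\<And>n. open (Fo n)" "closed G" "\<not> meager ((\<Inter>n. Fo n) \<inter> G)"
  shows "\<exists>K. closed K \<and> uncountable K \<and> K \<subseteq> (\<Inter>n. Fo n) \<inter> G"
proof -
  define W where "W = (\<Inter>n. Fo n) \<inter> G"
  obtain a b where ab: "a < b" "{a<..<b} \<subseteq> closure W"
    using not_meager_interval assms(3) unfolding W_def by blast
  have "cscheme Fo a b"
  proof
    show "open (Fo n)" for n by (rule assms(1))
    fix n c d assume "a < c" "c < d" "d < b"
    then have "(c+d)/2 \<in> {c<..<d}" "(c+d)/2 \<in> {a<..<b}" by auto
    then have "{c<..<d} \<inter> closure W \<noteq> {}" using ab(2) by blast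
    then have "{c<..<d} \<inter> W \<noteq> {}" using open_Int_closure_eq_empty[of "{c<..<d}" W] by auto
    then show "{c<..<d} \<inter> Fo n \<noteq> {}" unfolding W_def by blast
  qed
  from cscheme.exists_K[OF this ab(1)] obtain K where K: "closed K" "uncountable K"
    "K \<subseteq> {a<..<b} \<inter> (\<Inter>n. Fo n)" by blast
  have "closure W \<subseteq> G" unfolding W_def using assms(2) by (intro closure_minimal) auto
  then show ?thesis using K ab by (intro exI[of _ K]) auto
qed

lemma point_equi:
  fixes h :: "real \<Rightarrow> real"
  assumes "\<And>y. y \<noteq> p \<Longrightarrow> h y = 0"
  shows "equi_baire1_on UNIV (range (\<lambda>n::nat. h))"
  unfolding equi_baire1_on_def
proof (intro allI impI)
  fix \<epsilon> :: real assume e: "\<epsilon> > 0"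
  define \<delta> where "\<delta> y = (if y = p then 1 else \<bar>y - p\<bar>/2)" for y
  have pos: "\<forall>x\<in>UNIV. \<delta> x > 0" by (auto simp: \<delta>_def)
  have main: "\<forall>x\<in>UNIV. \<forall>y\<in>UNIV. \<forall>f\<in>range (\<lambda>n::nat. h). dist x y < min (\<delta> x) (\<delta> y) \<longrightarrow> dist (f x) (f y) < \<epsilon>"
  proof (intro ballI impI)
    fix y z f assume "y \<in> UNIV" "z \<in> UNIV" "f \<in> range (\<lambda>n::nat. h)" and d: "dist y z < min (\<delta> y) (\<delta> z)"
    then have fh: "f = h" by auto
    show "dist (f y) (f z) < \<epsilon>"
    proof (cases "y = p")
      case y: True
      show ?thesis
      proof (cases "z = p")
        case True then show ?thesis using y e by simp
      next
        case False then show ?thesis using d y by (auto simp: dist_real_def abs_minus_commute \<delta>_def)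
      qed
    next
      case y: False
      show ?thesis
      proof (cases "z = p")
        case True then show ?thesis using d y by (auto simp: dist_real_def abs_minus_commute \<delta>_def)
      next
        case False then show ?thesis using assms fh e y by simp
      qed
    qed
  qed
  show "\<exists>\<delta>. (\<forall>x\<in>UNIV. \<delta> x > 0) \<and> (\<forall>x\<in>UNIV. \<forall>y\<in>UNIV. \<forall>f\<in>range (\<lambda>n::nat. h). dist x y < min (\<delta> x) (\<delta> y) \<longrightarrow> dist (f x) (f y) < \<epsilon>)"
    by (rule exI[of _ \<delta>], rule conjI[OF pos main])
qed

lemma dist_diag: "dist ((b::real),b) (c,c) \<le> 2 * \<bar>b - c\<bar>"
proof -
  have "dist (b,b) (c,c) = sqrt ((dist b c)\<^sup>2 + (dist b c)\<^sup>2)" by (simp add: dist_Pair_Pair)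
  also have "\<dots> \<le> sqrt ((2 * \<bar>b - c\<bar>)\<^sup>2)"
    by (intro real_sqrt_le_mono) (simp add: dist_real_def power2_eq_square)
  also have "\<dots> = 2 * \<bar>b - c\<bar>" by (subst real_sqrt_abs) simp
  finally show ?thesis .
qed

theorem part2:
  assumes B: "bernstein B"
  shows "sep_equi_not_joint (\<lambda>n. indicator {(x, x) | x. x \<in> B})"
proof -
  define D where "D = {(x, x) | x. x \<in> B}"
  have ind: "indicator D (u, v) = (if u = v \<and> u \<in> B then 1 else (0::real))" for u v
    unfolding D_def by (auto simp: indicator_def)
  have P1: "equi_baire1_on UNIV (range (\<lambda>(n::nat) y. indicator D (x, y) :: real))" for x
    by (rule point_equi[where h="\<lambda>y. indicator D (x, y)" and p=x]) (simp add: ind)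
  have P2: "equi_baire1_on UNIV (range (\<lambda>(n::nat) x. indicator D (x, y) :: real))" for y
    by (rule point_equi[where h="\<lambda>x. indicator D (x, y)" and p=y]) (auto simp: ind)
  have P3: "\<not> equi_baire1_on (A \<times> UNIV) (range (\<lambda>n::nat. indicator D :: real \<times> real \<Rightarrow> real))"
    if A: "gdelta A" "\<not> meager A" for A
  proof
    assume "equi_baire1_on (A \<times> UNIV) (range (\<lambda>n::nat. indicator D :: real \<times> real \<Rightarrow> real))"
    then obtain \<delta> where dpos: "\<And>p. p \<in> A \<times> UNIV \<Longrightarrow> \<delta> p > 0"
      and dd: "\<And>p q. p \<in> A \<times> UNIV \<Longrightarrow> q \<in> A \<times> UNIV \<Longrightarrow> dist p q < min (\<delta> p) (\<delta> q) \<Longrightarrow>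
                 dist (indicator D p :: real) (indicator D q) < 1"
      unfolding equi_baire1_on_def by (metis rangeI zero_less_one)
    define d where "d t = \<delta> (t, t)" for t
    have dpos': "t \<in> A \<Longrightarrow> d t > 0" for t using dpos unfolding d_def by auto
    have key: "False" if "b \<in> A" "b \<in> B" "c \<in> A" "c \<notin> B" "2 * \<bar>b - c\<bar> < min (d b) (d c)" for b c
    proof -
      have "dist (b,b) (c,c) < min (\<delta> (b,b)) (\<delta> (c,c))"
        using dist_diag[of b c] that(5) unfolding d_def by linarith
      from dd[OF _ _ this] that show False by (simp add: ind)
    qed
    define E where "E n = {t \<in> A \<inter> B. d t > 1 / Suc n}" for n :: nat
    define F where "F n = {t \<in> A - B. d t > 1 / Suc n}" for n :: nat
    have mono_thr: "m \<le> n \<Longrightarrow> 1 / real (Suc n) \<le> 1 / Suc m" for m n :: nat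
      by (simp add: frac_le)
    have Emono: "m \<le> n \<Longrightarrow> E m \<subseteq> E n" for m n
      unfolding E_def using mono_thr by fastforce
    have Fmono: "m \<le> n \<Longrightarrow> F m \<subseteq> F n" for m n
      unfolding F_def using mono_thr by fastforce
    have inE: "\<exists>m. t \<in> E m" if tAB: "t \<in> A" "t \<in> B" for t
    proof -
      obtain n where n: "0 < n" "inverse (real n) < d t" using ex_inverse_of_nat_less dpos'[OF tAB(1)]
        by blast
      then have "1 / real (Suc (n - 1)) < d t" by (simp add: inverse_eq_divide)
      then obtain m where "1 / real (Suc m) < d t" by blast
      then show ?thesis using tAB unfolding E_def by blast
    qed
    have inF: "\<exists>m. t \<in> F m" if tAB: "t \<in> A" "t \<notin> B" for t
    proof -
      obtain n where n: "0 < n" "inverse (real n) < d t" using ex_inverse_of_nat_less dpos'[OF tAB(1)]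
        by blast
      then have "1 / real (Suc (n - 1)) < d t" by (simp add: inverse_eq_divide)
      then obtain m where "1 / real (Suc m) < d t" by blast
      then show ?thesis using tAB unfolding F_def by blast
    qed
    have X1: "False" if tt: "t \<in> E n" "t \<in> closure (F n)" for t n
    proof -
      have "0 < 1 / (2 * real (Suc n))" by simp
      then obtain c where c: "c \<in> F n" "dist c t < 1 / (2 * real (Suc n))"
        using tt(2) closure_approachable by blast
      have "2 * \<bar>t - c\<bar> < 1 / Suc n" using c(2) by (simp add: dist_real_def field_simps abs_minus_commute)
      then show False using key[of t c] tt(1) c(1) unfolding E_def F_def by auto
    qed
    have X2: "False" if tt: "t \<in> F n" "t \<in> closure (E n)" for t n
    proof -
      have "0 < 1 / (2 * real (Suc n))" by simp
      then obtain c where c: "c \<in> E n" "dist c t < 1 / (2 * real (Suc n))"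
        using tt(2) closure_approachable by blast
      have "2 * \<bar>c - t\<bar> < 1 / Suc n" using c(2) by (simp add: dist_real_def field_simps abs_minus_commute)
      then show False using key[of c t] tt(1) c(1) unfolding E_def F_def by auto
    qed
    from A(1) obtain Fo where Fo: "\<And>n::nat. open (Fo n)" "A = (\<Inter>n. Fo n)"
      by (auto elim: gdelta.cases)
    define S where "S n = A \<inter> closure (F n)" for n
    define T where "T n = A \<inter> closure (E n)" for n
    have cov: "A \<subseteq> (\<Union>n. S n) \<union> (\<Union>n. T n)"
    proof
      fix t assume t: "t \<in> A"
      show "t \<in> (\<Union>n. S n) \<union> (\<Union>n. T n)"
      proof (cases "t \<in> B")
        case True
        then obtain m where "t \<in> E m" using inE t by blast
        then show ?thesis unfolding T_def using t closure_subset by blast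
      next
        case False
        then obtain m where "t \<in> F m" using inF t by blast
        then show ?thesis unfolding S_def using t closure_subset by blast
      qed
    qed
    have "\<exists>n. \<not> meager (S n) \<or> \<not> meager (T n)"
    proof (rule ccontr)
      assume "\<not> ?thesis"
      then have "meager ((\<Union>n. S n) \<union> (\<Union>n. T n))" by (intro meager_Un meager_UN) auto
      then show False using cov A(2) meager_mono by blast
    qed
    then obtain n where n: "\<not> meager (S n) \<or> \<not> meager (T n)" by blast
    then show False
    proof
      assume "\<not> meager (S n)"
      then obtain K where K: "closed K" "uncountable K" "K \<subseteq> A \<inter> closure (F n)"
        using not_meager_closed[of Fo "closure (F n)"] Fo unfolding S_def by auto
      then obtain t where t: "t \<in> B" "t \<in> K" using B unfolding bernstein_def by blast
      then have tA: "t \<in> A" and tc: "t \<in> closure (F n)" using K by auto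
      obtain m where m: "t \<in> E m" using inE tA t by blast
      have "t \<in> E (max m n)" using Emono[of m "max m n"] m by auto
      moreover have "t \<in> closure (F (max m n))" using closure_mono[OF Fmono[of n "max m n"]] tc by auto
      ultimately show False using X1 by blast
    next
      assume "\<not> meager (T n)"
      then obtain K where K: "closed K" "uncountable K" "K \<subseteq> A \<inter> closure (E n)"
        using not_meager_closed[of Fo "closure (E n)"] Fo unfolding T_def by auto
      then obtain t where t: "t \<notin> B" "t \<in> K" using B unfolding bernstein_def by blast
      then have tA: "t \<in> A" and tc: "t \<in> closure (E n)" using K by auto
      obtain m where m: "t \<in> F m" using inF tA t by blast
      have "t \<in> F (max m n)" using Fmono[of m "max m n"] m by auto
      moreover have "t \<in> closure (E (max m n))" using closure_mono[OF Emono[of n "max m n"]] tc by auto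
      ultimately show False using X2 by blast
    qed
  qed
  show ?thesis unfolding sep_equi_not_joint_def D_def[symmetric]
    using P1 P2 P3 by blast
qed




lemma closed_complement_basis:
  fixes \<B> :: "real set set"
  assumes "\<And>S. open S \<Longrightarrow> \<exists>U. U \<subseteq> \<B> \<and> S = \<Union>U" "closed C"
  shows "- C = \<Union>{b \<in> \<B>. b \<inter> C = {}}"
proof -
  obtain U where U: "U \<subseteq> \<B>" "- C = \<Union>U" using assms by (meson open_Compl)
  show ?thesis using U by blast
qed

lemma closed_sets_lepoll: "{C::real set. closed C \<and> uncountable C} \<lesssim> (UNIV::real set)"
proof -
  obtain \<B> :: "real set set" where B: "countable \<B>" "\<And>C. C \<in> \<B> \<Longrightarrow> open C"
       "\<And>S. open S \<Longrightarrow> \<exists>U. U \<subseteq> \<B> \<and> S = \<Union>U"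
    using univ_second_countable by blast
  define g where "g = to_nat_on \<B>"
  have ginj: "inj_on g \<B>" unfolding g_def using B(1) by blast
  define \<phi> where "\<phi> C = g ` {b \<in> \<B>. b \<inter> C = {}}" for C
  have "inj_on \<phi> {C::real set. closed C \<and> uncountable C}"
  proof (rule inj_onI)
    fix C D assume C: "C \<in> {C::real set. closed C \<and> uncountable C}" and D: "D \<in> {C::real set. closed C \<and> uncountable C}"
      and eq: "\<phi> C = \<phi> D"
    have iff: "g ` {b \<in> \<B>. b \<inter> C = {}} = g ` {b \<in> \<B>. b \<inter> D = {}} \<longleftrightarrow>
               {b \<in> \<B>. b \<inter> C = {}} = {b \<in> \<B>. b \<inter> D = {}}"
      by (rule inj_on_image_eq_iff[OF ginj]) auto
    have "{b \<in> \<B>. b \<inter> C = {}} = {b \<in> \<B>. b \<inter> D = {}}"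
      using eq iff unfolding \<phi>_def by simp
    then have "- C = - D"
      using closed_complement_basis[OF B(3)] C D by auto
    then show "C = D" by simp
  qed
  then have "{C::real set. closed C \<and> uncountable C} \<lesssim> (UNIV :: nat set set)"
    unfolding lepoll_def by blast
  also have "(UNIV :: nat set set) \<lesssim> (UNIV :: real set)"
    by (simp add: eqpoll_imp_lepoll nat_sets_eqpoll_reals)
  finally show ?thesis .
qed

lemma uncountable_closed_lepoll:
  fixes C :: "real set"
  assumes "closed C" "uncountable C"
  shows "(UNIV::real set) \<lesssim> C"
proof -
  obtain \<B> :: "real set set" where B: "countable \<B>" "\<And>C. C \<in> \<B> \<Longrightarrow> open C"
       "\<And>S. open S \<Longrightarrow> \<exists>U. U \<subseteq> \<B> \<and> S = \<Union>U"
    using univ_second_countable by blast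
  define P where "P = {x \<in> C. \<forall>e>0. uncountable (C \<inter> ball x e)}"
  have "C - P \<subseteq> \<Union>((\<lambda>b. C \<inter> b) ` {b \<in> \<B>. countable (C \<inter> b)})"
  proof
    fix x assume x: "x \<in> C - P"
    then obtain e where e: "e > 0" "countable (C \<inter> ball x e)" unfolding P_def by blast
    obtain U where U: "U \<subseteq> \<B>" "ball x e = \<Union>U" using B(3)[of "ball x e"] by auto
    then obtain b where b: "b \<in> U" "x \<in> b" using e(1) by (metis UnionE centre_in_ball)
    have "b \<subseteq> ball x e" using U b by blast
    then have "countable (C \<inter> b)" by (intro countable_subset[OF _ e(2)]) blast
    then show "x \<in> \<Union>((\<lambda>b. C \<inter> b) ` {b \<in> \<B>. countable (C \<inter> b)})" using b U x by blast
  qed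
  moreover have "countable (\<Union>((\<lambda>b. C \<inter> b) ` {b \<in> \<B>. countable (C \<inter> b)}))"
    using B(1) by (intro countable_UN) auto
  ultimately have cCP: "countable (C - P)" by (rule countable_subset)
  have PC: "P \<subseteq> C" unfolding P_def by blast
  have Pne: "P \<noteq> {}"
  proof
    assume "P = {}"
    then show False using cCP assms(2) by simp
  qed
  have "euclidean derived_set_of P = P"
  proof
    show "euclidean derived_set_of P \<subseteq> P"
    proof
      fix x assume x: "x \<in> euclidean derived_set_of P"
      then have lim: "\<And>T. x \<in> T \<Longrightarrow> open T \<Longrightarrow> \<exists>y. y \<noteq> x \<and> y \<in> P \<and> y \<in> T"
        by (auto simp: in_derived_set_of)
      have "x \<in> C"
      proof (rule ccontr)
        assume "x \<notin> C"
        then obtain y where "y \<in> P" "y \<in> - C" using lim[of "- C"] assms(1) by auto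
        then show False using PC by auto
      qed
      moreover have "uncountable (C \<inter> ball x e)" if ep: "e > 0" for e
      proof -
        obtain y where y: "y \<in> P" "y \<in> ball x e" using lim[of "ball x e"] ep by auto
        define e' where "e' = e - dist x y"
        have "e' > 0" using y(2) by (simp add: e'_def)
        then have "uncountable (C \<inter> ball y e')" using y(1) unfolding P_def by blast
        moreover have "ball y e' \<subseteq> ball x e"
        proof
          fix z assume "z \<in> ball y e'"
          then have "dist y z < e'" by simp
          then show "z \<in> ball x e" using dist_triangle[of x z y] by (simp add: e'_def)
        qed
        ultimately show ?thesis
        proof -
          assume u: "uncountable (C \<inter> ball y e')" and sb: "ball y e' \<subseteq> ball x e"
          show ?thesis
          proof
            assume "countable (C \<inter> ball x e)"
            moreover have "C \<inter> ball y e' \<subseteq> C \<inter> ball x e" using sb by blast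
            ultimately have "countable (C \<inter> ball y e')" by (rule countable_subset[rotated])
            then show False using u by simp
          qed
        qed
      qed
      ultimately show "x \<in> P" unfolding P_def by blast
    qed
  next
    show "P \<subseteq> euclidean derived_set_of P"
    proof
      fix x assume x: "x \<in> P"
      have "\<exists>y. y \<noteq> x \<and> y \<in> P \<and> y \<in> T" if xT: "x \<in> T" "open T" for T
      proof -
        obtain e where e: "e > 0" "ball x e \<subseteq> T" using xT open_contains_ball by blast
        have unc: "uncountable (C \<inter> ball x e)" using x e unfolding P_def by blast
        have "C \<inter> ball x e \<subseteq> (C - P) \<union> {x} \<union> {y. y \<noteq> x \<and> y \<in> P \<and> y \<in> T}" using e by blast
        moreover have "countable ((C - P) \<union> {x})" using cCP by simp
        ultimately have "{y. y \<noteq> x \<and> y \<in> P \<and> y \<in> T} \<noteq> {}"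
        proof (intro notI)
          assume sb: "C \<inter> ball x e \<subseteq> (C - P) \<union> {x} \<union> {y. y \<noteq> x \<and> y \<in> P \<and> y \<in> T}"
            and c: "countable ((C - P) \<union> {x})" and em: "{y. y \<noteq> x \<and> y \<in> P \<and> y \<in> T} = {}"
          have "C \<inter> ball x e \<subseteq> (C - P) \<union> {x}" using sb em by simp
          then have "countable (C \<inter> ball x e)" using c by (rule countable_subset)
          then show False using unc by simp
        qed
        then show ?thesis by blast
      qed
      then show "x \<in> euclidean derived_set_of P" by (auto simp: in_derived_set_of)
    qed
  qed
  then have "(UNIV::real set) \<lesssim> P"
    using lepoll_perfect_set[of euclidean P] completely_metrizable_space_euclidean Pne by blast
  also have "P \<lesssim> C" using PC by (rule subset_imp_lepoll)
  finally show ?thesis .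
qed




unbundle cardinal_syntax


lemma lepoll_ordLeq: "A \<lesssim> B \<Longrightarrow> |A| \<le>o |B|"
  unfolding lepoll_def using card_of_ordLeq by blast

lemma avoid: "|X| <o |C| \<Longrightarrow> \<exists>x\<in>C. x \<notin> X"
proof (rule ccontr)
  assume "|X| <o |C|" "\<not> (\<exists>x\<in>C. x \<notin> X)"
  then have "C \<subseteq> X" by blast
  then have "|C| \<le>o |X|" by (rule card_of_mono1)
  then show False using \<open>|X| <o |C|\<close> not_ordLess_ordLeq by blast
qed

lemma single_less: "\<not> finite C \<Longrightarrow> |{a}| <o |C|"
  by (rule finite_ordLess_infinite[OF card_of_Well_order card_of_Well_order]) (simp_all add: Field_card_of)

theorem bernstein_exists: "\<exists>B. bernstein B"
proof -
  define \<C> where "\<C> = {C::real set. closed C \<and> uncountable C}"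
  define r where "r = |\<C>|"
  have Wr: "wo_rel r" unfolding wo_rel_def r_def using card_of_Well_order by blast
  have Fr: "Field r = \<C>" by (simp add: r_def Field_card_of)
  have big: "r \<le>o |C|" if "C \<in> \<C>" for C
  proof -
    have "r \<le>o |UNIV::real set|" unfolding r_def \<C>_def
      by (rule lepoll_ordLeq[OF closed_sets_lepoll])
    moreover have "|UNIV::real set| \<le>o |C|" using that unfolding \<C>_def
      by (intro lepoll_ordLeq uncountable_closed_lepoll) auto
    ultimately show ?thesis by (rule ordLeq_transitive)
  qed
  define Uf where "Uf f C = (\<lambda>D. fst (f D)) ` underS r C \<union> (\<lambda>D. snd (f D)) ` underS r C"
    for f :: "real set \<Rightarrow> real \<times> real" and C
  define H where "H f C = (SOME p. fst p \<in> C \<and> snd p \<in> C \<and> fst p \<noteq> snd p \<and> fst p \<notin> Uf f C \<and> snd p \<notin> Uf f C)"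
    for f C
  have adm: "wo_rel.adm_wo r H"
    unfolding wo_rel.adm_wo_def[OF Wr]
  proof (intro allI impI)
    fix f g :: "real set \<Rightarrow> real \<times> real" and x
    assume "\<forall>y\<in>underS r x. f y = g y"
    then have "Uf f x = Uf g x" unfolding Uf_def by (auto intro!: image_cong)
    then show "H f x = H g x" unfolding H_def by simp
  qed
  define F where "F = wo_rel.worec r H"
  have fixF: "F = H F" unfolding F_def using wo_rel.worec_fixpoint[OF Wr adm] .
  have spec: "fst (F C) \<in> C \<and> snd (F C) \<in> C \<and> fst (F C) \<noteq> snd (F C) \<and> fst (F C) \<notin> Uf F C \<and> snd (F C) \<notin> Uf F C"
    if C: "C \<in> \<C>" for C
  proof -
    have inf: "\<not> finite C" using C unfolding \<C>_def using countable_finite by blast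
    have us: "|underS r C| <o r" using card_of_underS[OF card_of_Card_order, of C \<C>] C
      by (simp add: r_def Field_card_of)
    then have us': "|underS r C| <o |C|" using big[OF C] by (rule ordLess_ordLeq_trans)
    have "|(\<lambda>D. fst (F D)) ` underS r C| <o |C|"
      using card_of_image us' by (rule ordLeq_ordLess_trans)
    moreover have "|(\<lambda>D. snd (F D)) ` underS r C| <o |C|"
      using card_of_image us' by (rule ordLeq_ordLess_trans)
    ultimately have U: "|Uf F C| <o |C|" unfolding Uf_def by (rule card_of_Un_ordLess_infinite[OF inf])
    then obtain a where a: "a \<in> C" "a \<notin> Uf F C" using avoid by blast
    have "|Uf F C \<union> {a}| <o |C|" using card_of_Un_ordLess_infinite[OF inf U single_less[OF inf]] .
    then obtain b where b: "b \<in> C" "b \<notin> Uf F C \<union> {a}" using avoid by blast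
    have "\<exists>p. fst p \<in> C \<and> snd p \<in> C \<and> fst p \<noteq> snd p \<and> fst p \<notin> Uf F C \<and> snd p \<notin> Uf F C"
      using a b by (intro exI[of _ "(a,b)"]) auto
    then have Q: "fst (H F C) \<in> C \<and> snd (H F C) \<in> C \<and> fst (H F C) \<noteq> snd (H F C) \<and> fst (H F C) \<notin> Uf F C \<and> snd (H F C) \<notin> Uf F C"
      unfolding H_def by (rule someI_ex)
    have eqF: "F C = H F C" using fun_cong[OF fixF] .
    show ?thesis using Q unfolding eqF .
  qed
  define B where "B = (\<lambda>C. fst (F C)) ` \<C>"
  have "bernstein B"
    unfolding bernstein_def
  proof (intro allI impI conjI)
    fix C :: "real set" assume "closed C \<and> uncountable C"
    then have C: "C \<in> \<C>" unfolding \<C>_def by blast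
    show "B \<inter> C \<noteq> {}" using spec[OF C] C unfolding B_def by blast
    have "snd (F C) \<notin> B"
    proof
      assume "snd (F C) \<in> B"
      then obtain D where D: "D \<in> \<C>" "snd (F C) = fst (F D)" unfolding B_def by blast
      show False
      proof (cases "D = C")
        case True then show False using spec[OF C] D by simp
      next
        case False
        have "(C,D) \<in> r \<or> (D,C) \<in> r" using wo_rel.TOTALS[OF Wr] C D Fr by blast
        then show False
        proof
          assume "(C,D) \<in> r"
          then have "C \<in> underS r D" using False unfolding underS_def by blast
          then have "snd (F C) \<in> Uf F D" unfolding Uf_def by blast
          then show False using spec[OF D(1)] D(2) by simp
        next
          assume "(D,C) \<in> r"
          then have "D \<in> underS r C" using False unfolding underS_def by blast
          then have "fst (F D) \<in> Uf F C" unfolding Uf_def by blast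
          then show False using spec[OF C] D(2) by simp
        qed
      qed
    qed
    then show "- B \<inter> C \<noteq> {}" using spec[OF C] by blast
  qed
  then show ?thesis by blast
qed


theorem mainTheorem18:
  shows "(\<exists>f :: nat \<Rightarrow> real \<times> real \<Rightarrow> real. sep_equi_not_joint f) \<and>
         (\<forall>B. bernstein B \<longrightarrow>
            sep_equi_not_joint (\<lambda>n. indicator {(x, x) | x. x \<in> B}))"
proof -
  obtain B where B: "bernstein B" using bernstein_exists by blast
  have "sep_equi_not_joint (\<lambda>n. indicator {(x, x) | x. x \<in> B})" by (rule part2[OF B])
  then have "\<exists>f :: nat \<Rightarrow> real \<times> real \<Rightarrow> real. sep_equi_not_joint f" by blast
  moreover have "\<forall>B. bernstein B \<longrightarrow> sep_equi_not_joint (\<lambda>n. indicator {(x, x) | x. x \<in> B})"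
    using part2 by blast
  ultimately show ?thesis by blast
qed

end
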